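(* Let $\mu_1,\mu_2$ be compactly supported positive Borel measures on $\mathbb{C}$, both with infinite support, and suppose both $\operatorname{supp}(\mu_1)$ and $\operatorname{supp}(\mu_2)$ are polynomially convex. If $0<\lambda(\mu_1,\mu_2)\le\beta(\mu_1,\mu_2)<\infty$, then $\operatorname{supp}(\mu_1)=\operatorname{supp}(\mu_2)$.
   Context: For positive Borel measures $\mu_1,\mu_2$ on $\mathbb{C}$ with finite moments and $\mu_2$ infinitely supported, $\lambda(\mu_1,\mu_2)=\inf\{\int|p|^2d\mu_1/\int|p|^2d\mu_2 : p\in\mathbb{P}[z]\setminus\{0\}\}$ and $\beta(\mu_1,\mu_2)=\sup\{\int|p|^2d\mu_1/\int|p|^2d\mu_2 : p\in\mathbb{P}[z]\setminus\{0\}\}$ (equivalently, limits of the smallest/largest generalized eigenvalues of the $(n+1)\times(n+1)$ truncations of the moment matrix $\mathbf{M}(\mu_1)=(\int z^i\bar z^jd\mu_1)$ with respect to those of $\mathbf{M}(\mu_2)$). A compact set $K\subset\mathbb{C}$ is polynomially convex if $K=\operatorname{Pc}(K)$, where $\operatorname{Pc}(K)=\{z: |p(z)|\le\max_K|p| \ \forall p\in\mathbb{P}[z]\}$. *)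

theory Defs
  imports "HOL-Analysis.Analysis" "HOL-Computational_Algebra.Polynomial"
begin

definition msupp :: "complex measure \<Rightarrow> complex set" where
  "msupp \<mu> = {z. \<forall>e>0. emeasure \<mu> (ball z e) > 0}"

definition Pc :: "complex set \<Rightarrow> complex set" where
  "Pc K = {z. \<forall>p :: complex poly. cmod (poly p z) \<le> (SUP w\<in>K. cmod (poly p w))}"

definition poly_convex :: "complex set \<Rightarrow> bool" where
  "poly_convex K \<longleftrightarrow> K = Pc K"

definition rayleigh :: "complex measure \<Rightarrow> complex measure \<Rightarrow> complex poly \<Rightarrow> real" where
  "rayleigh \<mu>1 \<mu>2 p =
     (\<integral>z. (cmod (poly p z))^2 \<partial>\<mu>1) / (\<integral>z. (cmod (poly p z))^2 \<partial>\<mu>2)"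

definition lambda_mm :: "complex measure \<Rightarrow> complex measure \<Rightarrow> ereal" where
  "lambda_mm \<mu>1 \<mu>2 = (INF p\<in>{p. p \<noteq> 0}. ereal (rayleigh \<mu>1 \<mu>2 p))"

definition beta_mm :: "complex measure \<Rightarrow> complex measure \<Rightarrow> ereal" where
  "beta_mm \<mu>1 \<mu>2 = (SUP p\<in>{p. p \<noteq> 0}. ereal (rayleigh \<mu>1 \<mu>2 p))"

end

theory Submission imports Defs begin

lemma AE_msupp:
  fixes \<mu> :: "complex measure"
  assumes "sets \<mu> = sets borel"
  shows "AE z in \<mu>. z \<in> msupp \<mu>"
proof -
  define U where "U = {ball z e | z e. e > 0 \<and> emeasure \<mu> (ball z e) = 0}"
  have opn: "\<And>S. S \<in> U \<Longrightarrow> open S" unfolding U_def by auto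
  obtain F where F: "F \<subseteq> U" "countable F" "\<Union>F = \<Union>U"
    using Lindelof[OF opn] by blast
  have sub: "- msupp \<mu> \<subseteq> \<Union>U"
  proof
    fix z assume "z \<in> - msupp \<mu>"
    then obtain e where "e > 0" "\<not> emeasure \<mu> (ball z e) > 0"
      unfolding msupp_def by auto
    then have "ball z e \<in> U" unfolding U_def by (auto simp: zero_less_iff_neq_zero)
    then show "z \<in> \<Union>U" using \<open>e>0\<close> by (intro UnionI[of "ball z e"]) auto
  qed
  have "(\<Union>S\<in>F. id S) \<in> null_sets \<mu>"
  proof (rule null_sets_UN'[OF F(2)])
    fix S assume "S \<in> F"
    then obtain z e where "S = ball z e" "emeasure \<mu> (ball z e) = 0"
      using F(1) unfolding U_def by auto
    then show "id S \<in> null_sets \<mu>" using assms by (auto simp: null_sets_def)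
  qed
  then show ?thesis
    by (rule AE_I') (use sub F(3) in auto)
qed

lemma msupp_integrable:
  fixes \<mu> :: "complex measure"
  assumes "sets \<mu> = sets borel" "finite_measure \<mu>" "compact (msupp \<mu>)"
  shows "integrable \<mu> (\<lambda>z. (cmod (poly q z))^2)"
proof -
  have cont: "continuous_on UNIV (\<lambda>z. (cmod (poly q z))^2)"
    by (intro continuous_intros)
  have "compact ((\<lambda>z. (cmod (poly q z))^2) ` msupp \<mu>)"
    by (rule compact_continuous_image[OF continuous_on_subset[OF cont] assms(3)]) auto
  then obtain B where B: "\<forall>x\<in>(\<lambda>z. (cmod (poly q z))^2) ` msupp \<mu>. norm x \<le> B"
    using compact_imp_bounded bounded_iff by metis
  have meas: "(\<lambda>z. (cmod (poly q z))^2) \<in> borel_measurable \<mu>"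
    using measurable_cong_sets[OF assms(1) refl] cont
    by (metis borel_measurable_continuous_onI)
  show ?thesis
    apply (rule finite_measure.integrable_const_bound[OF assms(2), where B=B])
    using AE_msupp[OF assms(1)] B apply (auto elim!: AE_mp)
    using meas by simp
qed

lemma poly_pow_sq: "(cmod (poly (q^n) z))^2 = (cmod (poly q z)^2)^n"
  by (simp add: poly_power norm_power power_mult[symmetric] mult.commute)

lemma msupp_upper:
  fixes \<mu> :: "complex measure"
  assumes "sets \<mu> = sets borel" "finite_measure \<mu>" "compact (msupp \<mu>)"
    and le1: "\<forall>z\<in>msupp \<mu>. cmod (poly q z) \<le> 1"
  shows "(\<integral>z. (cmod (poly (q^n) z))^2 \<partial>\<mu>) \<le> measure \<mu> (space \<mu>)"
proof -
  have "(\<integral>z. (cmod (poly (q^n) z))^2 \<partial>\<mu>) \<le> (\<integral>z. 1 \<partial>\<mu>)"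
  proof (rule integral_mono_AE)
    show "integrable \<mu> (\<lambda>z. (cmod (poly (q^n) z))^2)"
      by (rule msupp_integrable[OF assms(1-3)])
    show "integrable \<mu> (\<lambda>z. 1::real)"
      by (rule finite_measure.integrable_const[OF assms(2)])
    show "AE z in \<mu>. (cmod (poly (q^n) z))^2 \<le> 1"
      using AE_msupp[OF assms(1)]
    proof (rule AE_mp, intro AE_I2 impI)
      fix z assume "z \<in> msupp \<mu>"
      then have "cmod (poly q z)^2 \<le> 1" using le1 by (simp add: power_le_one)
      then show "(cmod (poly (q^n) z))^2 \<le> 1" unfolding poly_pow_sq
        by (simp add: power_le_one)
    qed
  qed
  then show ?thesis by simp
qed

lemma msupp_lower:
  fixes \<mu> :: "complex measure"
  assumes "sets \<mu> = sets borel" "finite_measure \<mu>" "compact (msupp \<mu>)"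
    and z0: "z0 \<in> msupp \<mu>" and e: "e > 0" and d: "0 \<le> d"
    and ge: "\<forall>z\<in>ball z0 e. d \<le> cmod (poly q z)"
  shows "0 < measure \<mu> (ball z0 e)"
    and "measure \<mu> (ball z0 e) * (d^2)^n \<le> (\<integral>z. (cmod (poly (q^n) z))^2 \<partial>\<mu>)"
proof -
  have Bm: "ball z0 e \<in> sets \<mu>" using assms(1) by simp
  have fin: "emeasure \<mu> (ball z0 e) < \<infinity>"
    using finite_measure.emeasure_finite[OF assms(2), of "ball z0 e"] by (simp add: less_top)
  have "emeasure \<mu> (ball z0 e) > 0" using z0 e unfolding msupp_def by auto
  then show "0 < measure \<mu> (ball z0 e)"
    using assms(2) Bm by (simp add: finite_measure.emeasure_eq_measure)
  have "(\<integral>z. (d^2)^n * indicator (ball z0 e) z \<partial>\<mu>) \<le> (\<integral>z. (cmod (poly (q^n) z))^2 \<partial>\<mu>)"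
  proof (rule integral_mono)
    show "integrable \<mu> (\<lambda>z. (cmod (poly (q^n) z))^2)"
      by (rule msupp_integrable[OF assms(1-3)])
    show "integrable \<mu> (\<lambda>z. (d^2)^n * indicator (ball z0 e) z)"
      using Bm fin by (intro integrable_mult_right integrable_real_indicator) auto
    fix z
    show "(d^2)^n * indicator (ball z0 e) z \<le> (cmod (poly (q^n) z))^2"
    proof (cases "z \<in> ball z0 e")
      case True
      then have "d^2 \<le> cmod (poly q z)^2" using ge d by (simp add: power_mono)
      then show ?thesis using True unfolding poly_pow_sq by (simp add: power_mono d)
    qed simp
  qed
  then show "measure \<mu> (ball z0 e) * (d^2)^n \<le> (\<integral>z. (cmod (poly (q^n) z))^2 \<partial>\<mu>)"
    using Bm fin by (simp add: mult.commute)
qed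

lemma separate:
  assumes "compact K" "K \<noteq> {}" "poly_convex K" "z0 \<notin> K"
  shows "\<exists>q d e. q \<noteq> 0 \<and> 1 < d \<and> 0 < e \<and> (\<forall>z\<in>K. cmod (poly q z) \<le> 1)
     \<and> (\<forall>z\<in>ball z0 e. d \<le> cmod (poly q z))"
proof -
  from assms(3,4) have "z0 \<notin> Pc K" unfolding poly_convex_def by simp
  then obtain p where p: "cmod (poly p z0) > (SUP w\<in>K. cmod (poly p w))"
    unfolding Pc_def by (auto simp: not_le)
  define S where "S = (SUP w\<in>K. cmod (poly p w))"
  have cont: "continuous_on K (\<lambda>w. cmod (poly p w))" by (intro continuous_intros)
  have bdd: "bdd_above ((\<lambda>w. cmod (poly p w)) ` K)"
    using compact_continuous_image[OF cont assms(1)]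
    by (simp add: bounded_imp_bdd_above compact_imp_bounded)
  have leS: "\<And>w. w \<in> K \<Longrightarrow> cmod (poly p w) \<le> S"
    unfolding S_def by (rule cSUP_upper[OF _ bdd])
  obtain w where "w \<in> K" using assms(2) by auto
  then have S0: "0 \<le> S" using leS[of w] norm_ge_zero order_trans by blast
  define a where "a = cmod (poly p z0)"
  have aS: "S < a" using p unfolding a_def S_def by simp
  define c where "c = 2 / (a + S)"
  have c0: "c > 0" unfolding c_def using aS S0 by simp
  define q where "q = smult (complex_of_real c) p"
  have qabs: "\<And>z. cmod (poly q z) = 2 / (a + S) * cmod (poly p z)"
    unfolding q_def using c0 by (simp only: poly_smult norm_mult norm_of_real c_def[symmetric] abs_of_pos)
  have le1: "\<forall>z\<in>K. cmod (poly q z) \<le> 1"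
  proof
    fix z assume "z \<in> K"
    then have "cmod (poly p z) \<le> S" by (rule leS)
    then show "cmod (poly q z) \<le> 1" unfolding qabs using aS S0
      by (simp add: field_simps)
  qed
  have gt1: "1 < cmod (poly q z0)" unfolding qabs a_def[symmetric] using aS S0
    by (simp add: field_simps)
  define d where "d = (1 + cmod (poly q z0)) / 2"
  have d1: "1 < d" "d < cmod (poly q z0)" using gt1 unfolding d_def by auto
  have "isCont (\<lambda>z. cmod (poly q z)) z0" by (intro continuous_intros)
  then have "\<forall>\<^sub>F z in at z0. d < cmod (poly q z)"
    using d1(2) by (metis isCont_def order_tendstoD(1))
  then obtain e where e: "e > 0" "\<And>z. z \<noteq> z0 \<Longrightarrow> dist z z0 < e \<Longrightarrow> d < cmod (poly q z)"
    unfolding eventually_at by blast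
  have "\<forall>z\<in>ball z0 e. d \<le> cmod (poly q z)"
  proof
    fix z assume "z \<in> ball z0 e"
    then show "d \<le> cmod (poly q z)"
      using e d1 by (cases "z = z0") (auto simp: dist_commute intro: less_imp_le)
  qed
  moreover have "q \<noteq> 0" using gt1 by auto
  ultimately show ?thesis using le1 d1 e by blast
qed

lemma pos_lower:
  assumes "poly q w \<noteq> 0"
  shows "\<exists>e d. 0 < e \<and> 0 < d \<and> (\<forall>z\<in>ball w e. d \<le> cmod (poly q z))"
proof -
  define d where "d = cmod (poly q w) / 2"
  have d: "0 < d" "d < cmod (poly q w)" using assms unfolding d_def by auto
  have "isCont (\<lambda>z. cmod (poly q z)) w" by (intro continuous_intros)
  then have "\<forall>\<^sub>F z in at w. d < cmod (poly q z)"
    using d(2) by (metis isCont_def order_tendstoD(1))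
  then obtain e where e: "e > 0" "\<And>z. z \<noteq> w \<Longrightarrow> dist z w < e \<Longrightarrow> d < cmod (poly q z)"
    unfolding eventually_at by blast
  have "\<forall>z\<in>ball w e. d \<le> cmod (poly q z)"
  proof
    fix z assume "z \<in> ball w e"
    then show "d \<le> cmod (poly q z)"
      using e d by (cases "z = w") (auto simp: dist_commute intro: less_imp_le)
  qed
  then show ?thesis using d e by blast
qed

lemma denom_pos:
  fixes \<mu> :: "complex measure"
  assumes "sets \<mu> = sets borel" "finite_measure \<mu>" "compact (msupp \<mu>)"
    "infinite (msupp \<mu>)" "q \<noteq> 0"
  shows "0 < (\<integral>z. (cmod (poly q z))^2 \<partial>\<mu>)"
proof -
  have "finite {z. poly q z = 0}" using poly_roots_finite[OF assms(5)] .
  then obtain w where w: "w \<in> msupp \<mu>" "poly q w \<noteq> 0"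
    using assms(4) by (metis (mono_tags, lifting) finite_subset mem_Collect_eq subsetI)
  obtain e d where ed: "0 < e" "0 < d" "\<forall>z\<in>ball w e. d \<le> cmod (poly q z)"
    using pos_lower[OF w(2)] by blast
  note L = msupp_lower[OF assms(1-3) w(1) ed(1) less_imp_le[OF ed(2)] ed(3)]
  have "0 < measure \<mu> (ball w e) * (d^2)^1" using L(1) ed by simp
  also have "\<dots> \<le> (\<integral>z. (cmod (poly q z))^2 \<partial>\<mu>)" using L(2)[of 1] by simp
  finally show ?thesis .
qed

theorem corollary2:
  fixes \<mu>1 \<mu>2 :: "complex measure"
  assumes "sets \<mu>1 = sets borel" and "sets \<mu>2 = sets borel"
    and "finite_measure \<mu>1" and "finite_measure \<mu>2"
    and "compact (msupp \<mu>1)" and "compact (msupp \<mu>2)"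
    and "infinite (msupp \<mu>1)" and "infinite (msupp \<mu>2)"
    and "poly_convex (msupp \<mu>1)" and "poly_convex (msupp \<mu>2)"
    and "0 < lambda_mm \<mu>1 \<mu>2" and "lambda_mm \<mu>1 \<mu>2 \<le> beta_mm \<mu>1 \<mu>2"
    and "beta_mm \<mu>1 \<mu>2 < \<infinity>"
  shows "msupp \<mu>1 = msupp \<mu>2"
proof (rule ccontr)
  assume neq: "msupp \<mu>1 \<noteq> msupp \<mu>2"
  have ne1: "msupp \<mu>1 \<noteq> {}" and ne2: "msupp \<mu>2 \<noteq> {}" using assms(7,8) by auto
  define A where "A = (\<lambda>r. \<integral>z. (cmod (poly r z))^2 \<partial>\<mu>1)"
  define B where "B = (\<lambda>r. \<integral>z. (cmod (poly r z))^2 \<partial>\<mu>2)"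
  have ray: "\<And>r. rayleigh \<mu>1 \<mu>2 r = A r / B r" unfolding rayleigh_def A_def B_def ..
  show False
  proof (cases "\<exists>z0. z0 \<in> msupp \<mu>1 \<and> z0 \<notin> msupp \<mu>2")
    case True
    then obtain z0 where z0: "z0 \<in> msupp \<mu>1" "z0 \<notin> msupp \<mu>2" by blast
    obtain q d e where qde: "q \<noteq> 0" "1 < d" "0 < e" "\<forall>z\<in>msupp \<mu>2. cmod (poly q z) \<le> 1"
      "\<forall>z\<in>ball z0 e. d \<le> cmod (poly q z)"
      using separate[OF assms(6) ne2 assms(10) z0(2)] by blast
    obtain Bd where Bd: "beta_mm \<mu>1 \<mu>2 < ereal Bd"
      using ereal_dense2[OF assms(13)] by blast
    define m1 where "m1 = measure \<mu>1 (ball z0 e)"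
    define M2 where "M2 = measure \<mu>2 (space \<mu>2)"
    have low: "\<And>n. m1 * (d^2)^n \<le> A (q^n)" and m1: "0 < m1"
      using msupp_lower[OF assms(1,3,5) z0(1) qde(3) _ qde(5)] qde(2)
      unfolding m1_def A_def by auto
    have up: "\<And>n. B (q^n) \<le> M2"
      using msupp_upper[OF assms(2,4,6) qde(4)] unfolding B_def M2_def by auto
    have Bpos: "0 < B (q^n)" for n
    proof -
      have "q^n \<noteq> 0" using qde(1) by simp
      then show ?thesis using denom_pos[OF assms(2,4,6,8)] unfolding B_def by blast
    qed
    have M2: "0 < M2" using Bpos[of 0] up[of 0] by linarith
    have d2: "1 < d^2" using qde(2) by (simp add: one_less_power)
    obtain n where n: "Bd * M2 / m1 < (d^2)^n" using real_arch_pow[OF d2] by blast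
    have "Bd < m1 * (d^2)^n / M2" using n m1 M2 by (simp add: field_simps)
    also have "\<dots> \<le> A (q^n) / M2" using low[of n] M2 by (simp add: divide_right_mono)
    also have "\<dots> \<le> A (q^n) / B (q^n)"
      using Bpos[of n] up[of n] low[of n] m1 d2
      by (intro divide_left_mono) (auto intro!: order_trans[OF _ low[of n]])
    finally have "Bd < rayleigh \<mu>1 \<mu>2 (q^n)" by (simp add: ray)
    then have "ereal Bd < ereal (rayleigh \<mu>1 \<mu>2 (q^n))" by simp
    moreover have "ereal (rayleigh \<mu>1 \<mu>2 (q^n)) \<le> beta_mm \<mu>1 \<mu>2"
      unfolding beta_mm_def using qde(1) by (intro SUP_upper) auto
    ultimately show False using Bd by (meson less_le_trans less_asym)
  next
    case False
    with neq obtain z0 where z0: "z0 \<in> msupp \<mu>2" "z0 \<notin> msupp \<mu>1" by blast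
    obtain q d e where qde: "q \<noteq> 0" "1 < d" "0 < e" "\<forall>z\<in>msupp \<mu>1. cmod (poly q z) \<le> 1"
      "\<forall>z\<in>ball z0 e. d \<le> cmod (poly q z)"
      using separate[OF assms(5) ne1 assms(9) z0(2)] by blast
    obtain eps where eps: "0 < ereal eps" "ereal eps < lambda_mm \<mu>1 \<mu>2"
      using ereal_dense2[OF assms(11)] by blast
    define m2 where "m2 = measure \<mu>2 (ball z0 e)"
    define M1 where "M1 = measure \<mu>1 (space \<mu>1)"
    have low: "\<And>n. m2 * (d^2)^n \<le> B (q^n)" and m2: "0 < m2"
      using msupp_lower[OF assms(2,4,6) z0(1) qde(3) _ qde(5)] qde(2)
      unfolding m2_def B_def by auto
    have up: "\<And>n. A (q^n) \<le> M1"
      using msupp_upper[OF assms(1,3,5) qde(4)] unfolding A_def M1_def by auto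
    have Apos: "\<And>n. 0 \<le> A (q^n)" unfolding A_def by (intro integral_nonneg_AE) auto
    have M1: "0 \<le> M1" using Apos[of 0] up[of 0] by linarith
    have d2: "1 < d^2" using qde(2) by (simp add: one_less_power)
    have e0: "0 < eps" using eps(1) by simp
    obtain n where n: "M1 / (m2 * eps) < (d^2)^n" using real_arch_pow[OF d2] by blast
    have pp: "0 < (d^2)^n" using qde(2) by simp
    have "A (q^n) / B (q^n) \<le> M1 / B (q^n)"
      using up[of n] low[of n] m2 pp by (intro divide_right_mono) (auto intro: order_trans[OF _ low[of n]])
    also have "\<dots> \<le> M1 / (m2 * (d^2)^n)"
    proof -
      have mp: "0 < m2 * (d^2)^n" using m2 pp by simp
      then have "0 < B (q^n)" using low[of n] by linarith
      then show ?thesis using low[of n] mp M1 by (intro divide_left_mono) auto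
    qed
    also have "\<dots> < eps" using n m2 e0 pp by (simp add: field_simps)
    finally have "rayleigh \<mu>1 \<mu>2 (q^n) < eps" by (simp add: ray)
    then have "ereal (rayleigh \<mu>1 \<mu>2 (q^n)) < ereal eps" by simp
    moreover have "lambda_mm \<mu>1 \<mu>2 \<le> ereal (rayleigh \<mu>1 \<mu>2 (q^n))"
      unfolding lambda_mm_def using qde(1) by (intro INF_lower) auto
    ultimately show False using eps(2) by (meson le_less_trans less_asym)
  qed
qed

end
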